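(* Let $n \ge 1$, let $Q \ge 0$, and let $q_1,\dots,q_n \in [0,Q]$ be demands. Let $d_{i,i+1}$ ($1 \le i \le n-1$), $d_{0,i}$ and $d_{i,0}$ ($1 \le i \le n$) be real numbers. For $1 \le i \le n$ put $D[i] = \sum_{k=1}^{i-1} d_{k,k+1}$ and $Q[i] = \sum_{k=1}^{i} q_k$, with $Q[0]=0$. Let $\mathcal{G}=(\mathcal{V},\mathcal{A})$ be the directed acyclic graph with $\mathcal{V}=\{0,1,\dots,n\}$ and with an arc $(i,j)$, for $0 \le i<j\le n$, if and only if $Q[j]-Q[i] \le Q$; the arc $(i,j)$ has cost $c(i,j) = d_{0,i+1} + D[j] - D[i+1] + d_{j,0}$. Then there is an algorithm that computes a minimum-cost path from $0$ to $n$ in $\mathcal{G}$ (together with its cost) in $\mathcal{O}(n)$ time.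
   Context: This is the "Split" problem of route-first cluster-second heuristics for the capacitated vehicle routing problem: customers $1,\dots,n$ are given in a fixed order (a "giant tour"), $d_{0,i}$ and $d_{i,0}$ are the distances from the depot to customer $i$ and back, $d_{i,i+1}$ is the distance between consecutive customers, and an arc $(i,j)$ represents a route leaving the depot, visiting customers $i+1,\dots,j$ in order and returning to the depot, which is allowed only if its total demand is at most the vehicle capacity $Q$. A path from $0$ to $n$ thus corresponds to a partition of the giant tour into consecutive feasible routes, and its cost is the total routing cost. Running time is measured in the model where arithmetic operations and comparisons on reals take constant time. *)

theory Defs
  imports Complex_Main
begin

text \<open>Input data: n customers, capacity Q, demands q i (1 \<le> i \<le> n),
 dd i = d_{i,i+1} (1 \<le> i \<le> n-1), dO i = d_{0,i}, dB i = d_{i,0} (1 \<le> i \<le> n).\<close>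

definition Dpre :: "(nat \<Rightarrow> real) \<Rightarrow> nat \<Rightarrow> real" where
  "Dpre dd i = (\<Sum>k = 1..<i. dd k)"

definition Qpre :: "(nat \<Rightarrow> real) \<Rightarrow> nat \<Rightarrow> real" where
  "Qpre q i = (\<Sum>k = 1..i. q k)"

definition split_arc :: "nat \<Rightarrow> real \<Rightarrow> (nat \<Rightarrow> real) \<Rightarrow> nat \<Rightarrow> nat \<Rightarrow> bool" where
  "split_arc n Q q i j \<longleftrightarrow> i < j \<and> j \<le> n \<and> Qpre q j - Qpre q i \<le> Q"

definition arc_cost :: "(nat \<Rightarrow> real) \<Rightarrow> (nat \<Rightarrow> real) \<Rightarrow> (nat \<Rightarrow> real) \<Rightarrow> nat \<Rightarrow> nat \<Rightarrow> real" where
  "arc_cost dd dO dB i j = dO (i+1) + Dpre dd j - Dpre dd (Suc i) + dB j"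

definition is_split_path :: "nat \<Rightarrow> real \<Rightarrow> (nat \<Rightarrow> real) \<Rightarrow> nat list \<Rightarrow> bool" where
  "is_split_path n Q q vs \<longleftrightarrow> vs \<noteq> [] \<and> hd vs = 0 \<and> last vs = n \<and>
     (\<forall>k. Suc k < length vs \<longrightarrow> split_arc n Q q (vs ! k) (vs ! Suc k))"

definition path_cost :: "(nat \<Rightarrow> real) \<Rightarrow> (nat \<Rightarrow> real) \<Rightarrow> (nat \<Rightarrow> real) \<Rightarrow> nat list \<Rightarrow> real" where
  "path_cost dd dO dB vs = (\<Sum>k < length vs - 1. arc_cost dd dO dB (vs ! k) (vs ! Suc k))"

definition min_split_path ::
  "nat \<Rightarrow> real \<Rightarrow> (nat \<Rightarrow> real) \<Rightarrow> (nat \<Rightarrow> real) \<Rightarrow> (nat \<Rightarrow> real) \<Rightarrow> (nat \<Rightarrow> real) \<Rightarrow> nat list \<Rightarrow> bool" where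
  "min_split_path n Q q dd dO dB vs \<longleftrightarrow> is_split_path n Q q vs \<and>
     (\<forall>ws. is_split_path n Q q ws \<longrightarrow> path_cost dd dO dB vs \<le> path_cost dd dO dB ws)"

text \<open>Every instruction costs one step.
 Indirect addressing requires the address cell to hold an integer value (otherwise the
 machine is stuck, i.e. never halts).\<close>

datatype instr =
    LoadC int int
  | Copy int int
  | Add int int int
  | Sub int int int
  | Mul int int int
  | Load int int
  | Store int int
  | JumpLe int int nat
  | Halt

type_synonym mstate = "nat \<times> (int \<Rightarrow> real)"

fun exec_instr :: "instr \<Rightarrow> nat \<Rightarrow> (int \<Rightarrow> real) \<Rightarrow> mstate" where
  "exec_instr (LoadC r c) pc m = (Suc pc, m(r := of_int c))"
| "exec_instr (Copy r a) pc m = (Suc pc, m(r := m a))"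
| "exec_instr (Add r a b) pc m = (Suc pc, m(r := m a + m b))"
| "exec_instr (Sub r a b) pc m = (Suc pc, m(r := m a - m b))"
| "exec_instr (Mul r a b) pc m = (Suc pc, m(r := m a * m b))"
| "exec_instr (Load r a) pc m =
     (if m a \<in> \<int> then (Suc pc, m(r := m \<lfloor>m a\<rfloor>)) else (pc, m))"
| "exec_instr (Store a b) pc m =
     (if m a \<in> \<int> then (Suc pc, m(\<lfloor>m a\<rfloor> := m b)) else (pc, m))"
| "exec_instr (JumpLe a b t) pc m = (if m a \<le> m b then (t, m) else (Suc pc, m))"
| "exec_instr Halt pc m = (pc, m)"

definition mstep :: "instr list \<Rightarrow> mstate \<Rightarrow> mstate" where
  "mstep P s = (if fst s < length P then exec_instr (P ! fst s) (fst s) (snd s) else s)"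

definition halted :: "instr list \<Rightarrow> mstate \<Rightarrow> bool" where
  "halted P s \<longleftrightarrow> fst s \<ge> length P \<or> P ! fst s = Halt"

definition runs_in :: "instr list \<Rightarrow> (int \<Rightarrow> real) \<Rightarrow> nat \<Rightarrow> (int \<Rightarrow> real) \<Rightarrow> bool" where
  "runs_in P m t m' \<longleftrightarrow> halted P ((mstep P ^^ t) (0, m)) \<and>
     (\<forall>t' < t. \<not> halted P ((mstep P ^^ t') (0, m))) \<and> snd ((mstep P ^^ t) (0, m)) = m'"

text \<open>Input encoding: cell 0 = n, cell 1 = Q; for 1 \<le> i \<le> n the cells 10+4i .. 13+4i
 hold q_i, d_{i,i+1} (0 if i = n), d_{0,i}, d_{i,0}. All other cells are 0.\<close>
definition init_mem ::
  "nat \<Rightarrow> real \<Rightarrow> (nat \<Rightarrow> real) \<Rightarrow> (nat \<Rightarrow> real) \<Rightarrow> (nat \<Rightarrow> real) \<Rightarrow> (nat \<Rightarrow> real) \<Rightarrow> int \<Rightarrow> real" where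
  "init_mem n Q q dd dO dB a =
     (if a = 0 then real n else if a = 1 then Q
      else if a \<ge> 14 \<and> nat ((a - 10) div 4) \<le> n then
        (let i = nat ((a - 10) div 4); r = (a - 10) mod 4 in
          if r = 0 then q i else if r = 1 then (if i < n then dd i else 0)
          else if r = 2 then dO i else dB i)
      else 0)"

text \<open>Output convention: cell 2 = cost, cell 3 = number of vertices L of the path,
 cell -(k+1) = k-th vertex of the path (k < L).\<close>
definition output_ok ::
  "nat \<Rightarrow> real \<Rightarrow> (nat \<Rightarrow> real) \<Rightarrow> (nat \<Rightarrow> real) \<Rightarrow> (nat \<Rightarrow> real) \<Rightarrow> (nat \<Rightarrow> real) \<Rightarrow> (int \<Rightarrow> real) \<Rightarrow> bool" where
  "output_ok n Q q dd dO dB m \<longleftrightarrow> (\<exists>vs. min_split_path n Q q dd dO dB vs \<and>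
      m 2 = path_cost dd dO dB vs \<and> m 3 = real (length vs) \<and>
      (\<forall>k < length vs. m (- (int k + 1)) = real (vs ! k)))"

end

theory Submission
  imports Defs
begin

definition run :: "instr list \<Rightarrow> mstate \<Rightarrow> nat \<Rightarrow> mstate \<Rightarrow> bool" where
  "run P s t s' \<longleftrightarrow> (mstep P ^^ t) s = s' \<and> (\<forall>t'<t. \<not> halted P ((mstep P ^^ t') s))"

lemma run_0[simp]: "run P s 0 s' \<longleftrightarrow> s' = s"
  by (auto simp: run_def)

lemma funpow_Suc_right': "(f ^^ Suc t) s = (f ^^ t) (f s)"
  by (simp add: funpow_Suc_right del: funpow.simps)

lemma run_Suc: "run P s (Suc t) s' \<longleftrightarrow> \<not> halted P s \<and> run P (mstep P s) t s'"
proof -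
  have "(\<forall>t'<Suc t. \<not> halted P ((mstep P ^^ t') s)) \<longleftrightarrow>
        \<not> halted P s \<and> (\<forall>t'<t. \<not> halted P ((mstep P ^^ t') (mstep P s)))"
    by (simp add: All_less_Suc2 funpow_Suc_right' del: funpow.simps)
  then show ?thesis unfolding run_def funpow_Suc_right' by blast
qed

lemma run_trans: "run P s t1 s1 \<Longrightarrow> run P s1 t2 s2 \<Longrightarrow> run P s (t1 + t2) s2"
  by (induction t1 arbitrary: s) (auto simp: run_Suc)

lemma run_step: "pc < length P \<Longrightarrow> P ! pc \<noteq> Halt \<Longrightarrow>
   run P (pc, m) (Suc t) s' \<longleftrightarrow> run P (exec_instr (P ! pc) pc m) t s'"
  by (simp add: run_Suc halted_def mstep_def)

lemma run_num: "run P (pc, m) (numeral k) s' \<longleftrightarrow> pc < length P \<and> P ! pc \<noteq> Halt \<and>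
   run P (exec_instr (P ! pc) pc m) (pred_numeral k) s'"
  by (simp add: numeral_eq_Suc run_Suc halted_def mstep_def)

lemma run_one: "run P (pc, m) 1 s' \<longleftrightarrow> pc < length P \<and> P ! pc \<noteq> Halt \<and>
   s' = exec_instr (P ! pc) pc m"
  using run_step[of pc P m 0 s'] by (auto simp: run_Suc halted_def mstep_def)

lemma run_Suc0: "run P (pc, m) (Suc 0) s' \<longleftrightarrow> pc < length P \<and> P ! pc \<noteq> Halt \<and>
   s' = exec_instr (P ! pc) pc m"
  using run_one by simp

lemma floor_num_mult_nat[simp]: "\<lfloor>numeral k * real j\<rfloor> = numeral k * int j"
proof -
  have "numeral k * real j = real_of_int (numeral k * int j)" by simp
  then show ?thesis by (simp only: floor_of_int)
qed

definition prog :: "instr list" where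
 "prog = [
  Copy 11 16, LoadC 5 1, LoadC 2 1,
  LoadC 8 4, Mul 7 8 2, LoadC 8 10, Add 7 7 8, Load 8 7, Add 6 6 8, Store 7 6,
  LoadC 9 (-1), Sub 9 9 4, Load 8 9, LoadC 9 4, Mul 8 9 8, LoadC 9 10, Add 8 8 9, Load 8 8,
  Sub 8 6 8, JumpLe 8 1 23, LoadC 9 1, Add 4 4 9, JumpLe 0 0 10,
  LoadC 9 (-1), Sub 9 9 4, Load 8 9, LoadC 9 2, Add 9 7 9, Store 9 8,
  LoadC 9 4, Mul 8 9 8, LoadC 9 11, Add 8 8 9, Load 8 8,
  LoadC 9 3, Add 9 7 9, Load 9 9, Add 8 8 9, Add 8 8 3,
  LoadC 9 3, Add 9 7 9, Store 9 8,
  JumpLe 0 2 75,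
  LoadC 9 1, Add 9 7 9, Load 9 9, Add 3 3 9,
  LoadC 9 6, Add 9 7 9, Load 9 9, Add 8 8 9, Sub 8 8 3,
  LoadC 9 1, Add 9 7 9, Store 9 8,
  JumpLe 5 4 68, LoadC 9 0, Sub 9 9 5, Load 9 9, LoadC 7 4, Mul 9 7 9, LoadC 7 11, Add 9 9 7, Load 9 9,
  JumpLe 9 8 68, LoadC 9 1, Sub 5 5 9, JumpLe 0 0 55,
  LoadC 9 (-1), Sub 9 9 5, Store 9 2, LoadC 9 1, Add 5 5 9, Add 2 2 9, JumpLe 0 0 3,
  LoadC 5 1, Copy 4 0,
  LoadC 9 0, JumpLe 4 9 87, LoadC 9 4, Mul 9 9 4, LoadC 7 12, Add 9 9 7, Load 4 9, LoadC 9 1, Add 5 5 9, JumpLe 0 0 77,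
  Copy 4 0, LoadC 9 0, Sub 6 9 5,
  Store 6 4, LoadC 9 0, JumpLe 4 9 101, LoadC 9 4, Mul 9 9 4, LoadC 7 12, Add 9 9 7, Load 4 9, LoadC 9 1, Add 6 6 9, JumpLe 0 0 90,
  Copy 2 8, Copy 3 5, Halt]"

lemma prog_len: "length prog = 104" by (simp add: prog_def)

lemma prog_nth[simp]:
  "prog ! Suc 0 = LoadC 5 1"
  "prog ! Suc (Suc 0) = LoadC 2 1"
  "prog ! 0 = Copy 11 16"
  "prog ! 1 = LoadC 5 1"
  "prog ! 2 = LoadC 2 1"
  "prog ! 3 = LoadC 8 4"
  "prog ! 4 = Mul 7 8 2"
  "prog ! 5 = LoadC 8 10"
  "prog ! 6 = Add 7 7 8"
  "prog ! 7 = Load 8 7"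
  "prog ! 8 = Add 6 6 8"
  "prog ! 9 = Store 7 6"
  "prog ! 10 = LoadC 9 (-1)"
  "prog ! 11 = Sub 9 9 4"
  "prog ! 12 = Load 8 9"
  "prog ! 13 = LoadC 9 4"
  "prog ! 14 = Mul 8 9 8"
  "prog ! 15 = LoadC 9 10"
  "prog ! 16 = Add 8 8 9"
  "prog ! 17 = Load 8 8"
  "prog ! 18 = Sub 8 6 8"
  "prog ! 19 = JumpLe 8 1 23"
  "prog ! 20 = LoadC 9 1"
  "prog ! 21 = Add 4 4 9"
  "prog ! 22 = JumpLe 0 0 10"
  "prog ! 23 = LoadC 9 (-1)"
  "prog ! 24 = Sub 9 9 4"
  "prog ! 25 = Load 8 9"
  "prog ! 26 = LoadC 9 2"
  "prog ! 27 = Add 9 7 9"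
  "prog ! 28 = Store 9 8"
  "prog ! 29 = LoadC 9 4"
  "prog ! 30 = Mul 8 9 8"
  "prog ! 31 = LoadC 9 11"
  "prog ! 32 = Add 8 8 9"
  "prog ! 33 = Load 8 8"
  "prog ! 34 = LoadC 9 3"
  "prog ! 35 = Add 9 7 9"
  "prog ! 36 = Load 9 9"
  "prog ! 37 = Add 8 8 9"
  "prog ! 38 = Add 8 8 3"
  "prog ! 39 = LoadC 9 3"
  "prog ! 40 = Add 9 7 9"
  "prog ! 41 = Store 9 8"
  "prog ! 42 = JumpLe 0 2 75"
  "prog ! 43 = LoadC 9 1"
  "prog ! 44 = Add 9 7 9"
  "prog ! 45 = Load 9 9"
  "prog ! 46 = Add 3 3 9"
  "prog ! 47 = LoadC 9 6"
  "prog ! 48 = Add 9 7 9"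
  "prog ! 49 = Load 9 9"
  "prog ! 50 = Add 8 8 9"
  "prog ! 51 = Sub 8 8 3"
  "prog ! 52 = LoadC 9 1"
  "prog ! 53 = Add 9 7 9"
  "prog ! 54 = Store 9 8"
  "prog ! 55 = JumpLe 5 4 68"
  "prog ! 56 = LoadC 9 0"
  "prog ! 57 = Sub 9 9 5"
  "prog ! 58 = Load 9 9"
  "prog ! 59 = LoadC 7 4"
  "prog ! 60 = Mul 9 7 9"
  "prog ! 61 = LoadC 7 11"
  "prog ! 62 = Add 9 9 7"
  "prog ! 63 = Load 9 9"
  "prog ! 64 = JumpLe 9 8 68"
  "prog ! 65 = LoadC 9 1"
  "prog ! 66 = Sub 5 5 9"
  "prog ! 67 = JumpLe 0 0 55"
  "prog ! 68 = LoadC 9 (-1)"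
  "prog ! 69 = Sub 9 9 5"
  "prog ! 70 = Store 9 2"
  "prog ! 71 = LoadC 9 1"
  "prog ! 72 = Add 5 5 9"
  "prog ! 73 = Add 2 2 9"
  "prog ! 74 = JumpLe 0 0 3"
  "prog ! 75 = LoadC 5 1"
  "prog ! 76 = Copy 4 0"
  "prog ! 77 = LoadC 9 0"
  "prog ! 78 = JumpLe 4 9 87"
  "prog ! 79 = LoadC 9 4"
  "prog ! 80 = Mul 9 9 4"
  "prog ! 81 = LoadC 7 12"
  "prog ! 82 = Add 9 9 7"
  "prog ! 83 = Load 4 9"
  "prog ! 84 = LoadC 9 1"
  "prog ! 85 = Add 5 5 9"
  "prog ! 86 = JumpLe 0 0 77"
  "prog ! 87 = Copy 4 0"
  "prog ! 88 = LoadC 9 0"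
  "prog ! 89 = Sub 6 9 5"
  "prog ! 90 = Store 6 4"
  "prog ! 91 = LoadC 9 0"
  "prog ! 92 = JumpLe 4 9 101"
  "prog ! 93 = LoadC 9 4"
  "prog ! 94 = Mul 9 9 4"
  "prog ! 95 = LoadC 7 12"
  "prog ! 96 = Add 9 9 7"
  "prog ! 97 = Load 4 9"
  "prog ! 98 = LoadC 9 1"
  "prog ! 99 = Add 6 6 9"
  "prog ! 100 = JumpLe 0 0 90"
  "prog ! 101 = Copy 2 8"
  "prog ! 102 = Copy 3 5"
  "prog ! 103 = Halt"
  by (simp_all add: prog_def)

lemma floor_m1_minus_nat[simp]: "\<lfloor>- 1 - real h\<rfloor> = - 1 - int h"
proof -
  have "- 1 - real h = real_of_int (- 1 - int h)" by simp
  then show ?thesis by (simp only: floor_of_int)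
qed

lemma floor_minus_nat[simp]: "\<lfloor>- real h\<rfloor> = - int h"
proof -
  have "- real h = real_of_int (- int h)" by simp
  then show ?thesis by (simp only: floor_of_int)
qed

lemma m1_minus_nat_Ints[simp]: "- 1 - real h \<in> \<int>"
  by (metis Ints_1 Ints_diff Ints_minus Ints_of_nat)

lemmas S = run_num run_one run_Suc0 prog_len

lemma mod4_neq[simp]: "4 * int a \<noteq> 1 + 4 * int b" "1 + 4 * int b \<noteq> 4 * int a" by presburger+

lemma segA: "run prog (0, m) 3 (3, m(11 := m 16, 5 := 1, 2 := 1))"
  by (simp add: S)

lemma segB:
  assumes "m 2 = real j" "m 6 = x" "m (4 * int j + 10) = y"
  shows "\<exists>m'. run prog (3,m) 7 (10, m') \<and> m' 6 = x + y \<and> m' (4 * int j + 10) = x + y \<and>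
     m' 7 = 4 * real j + 10 \<and> (\<forall>a. a \<notin> {6,7,8,4 * int j + 10} \<longrightarrow> m' a = m a)"
  using assms by (simp add: S)

lemma segFL_exit:
  assumes "m 4 = real h" "m (- 1 - int h) = real e" "m (4 * int e + 10) = g" "m 6 - g \<le> m 1"
  shows "\<exists>m'. run prog (10,m) 10 (23, m') \<and> (\<forall>a. a \<notin> {8,9} \<longrightarrow> m' a = m a)"
  using assms by (simp add: S)

lemma segFL_pop:
  assumes "m 4 = real h" "m (- 1 - int h) = real e" "m (4 * int e + 10) = g" "\<not> m 6 - g \<le> m 1"
  shows "\<exists>m'. run prog (10,m) 13 (10, m') \<and> m' 4 = real (Suc h) \<and> (\<forall>a. a \<notin> {4,8,9} \<longrightarrow> m' a = m a)"
  using assms by (simp add: S)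

lemma segC:
  assumes "m 4 = real h" "m (- 1 - int h) = real e" "m 7 = 4 * real j + 10" "m (4 * int e + 11) = fe"
    "m (4 * int j + 13) = dBj" "m 3 = D" "m 2 = real j" "m 0 = real n"
  shows "\<exists>m'. run prog (23,m) 20 (if n \<le> j then 75 else 43, m') \<and> m' 8 = fe + dBj + D
     \<and> m' (4 * int j + 12) = real e \<and> m' (4 * int j + 13) = fe + dBj + D
     \<and> (\<forall>a. a \<notin> {8,9,4 * int j + 12,4 * int j + 13} \<longrightarrow> m' a = m a)"
  using assms by (simp add: S) (simp add: add.commute)

lemma segD:
  assumes "m 7 = 4 * real j + 10" "m (4 * int j + 11) = ddj" "m (4 * int j + 16) = dOj" "m 3 = D" "m 8 = V"
  shows "\<exists>m'. run prog (43,m) 12 (55, m') \<and> m' 3 = D + ddj \<and> m' 8 = V + dOj - (D + ddj)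
     \<and> m' (4 * int j + 11) = V + dOj - (D + ddj)
     \<and> (\<forall>a. a \<notin> {3,8,9,4 * int j + 11} \<longrightarrow> m' a = m a)"
  using assms by (simp add: S) (simp add: add.commute)

lemma segBL_empty:
  assumes "m 4 = real h" "m 5 = real t" "t \<le> h"
  shows "run prog (55,m) 1 (68, m)"
  using assms by (simp add: S)

lemma segBL_stop:
  assumes "m 4 = real h" "m 5 = real t" "h < t" "m (- int t) = real e" "m (4 * int e + 11) = g" "g \<le> m 8"
  shows "\<exists>m'. run prog (55,m) 10 (68, m') \<and> (\<forall>a. a \<notin> {7,9} \<longrightarrow> m' a = m a)"
  using assms by (simp add: S)

lemma segBL_pop:
  assumes "m 4 = real h" "m 5 = real t" "h < t" "m (- int t) = real e" "m (4 * int e + 11) = g" "\<not> g \<le> m 8"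
  shows "\<exists>m'. run prog (55,m) 13 (55, m') \<and> m' 5 = real (t - 1) \<and> (\<forall>a. a \<notin> {5,7,9} \<longrightarrow> m' a = m a)"
  using assms by (simp add: S of_nat_diff)

lemma segE:
  assumes "m 5 = real t" "m 2 = real j"
  shows "\<exists>m'. run prog (68,m) 7 (3, m') \<and> m' 5 = real (Suc t) \<and> m' 2 = real (Suc j) \<and>
     m' (- 1 - int t) = real j \<and> (\<forall>a. a \<notin> {2,5,9,- 1 - int t} \<longrightarrow> m' a = m a)"
  using assms by (simp add: S)

lemma segF: "run prog (75,m) 2 (77, m(5 := 1, 4 := m 0))"
  by (simp add: S)

lemma segCL_exit:
  assumes "m 4 = 0"
  shows "run prog (77,m) 2 (87, m(9 := 0))"
  using assms by (simp add: S)

lemma segCL_step: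
  assumes "m 4 = real x" "x \<noteq> 0" "m 5 = real L"
  shows "\<exists>m'. run prog (77,m) 10 (77, m') \<and> m' 4 = m (4 * int x + 12) \<and> m' 5 = real (Suc L) \<and>
    (\<forall>a. a \<notin> {4,5,7,9} \<longrightarrow> m' a = m a)"
  using assms by (simp add: S)

lemma segG: "run prog (87,m) 3 (90, m(4 := m 0, 9 := 0, 6 := - m 5))"
  by (simp add: S)

lemma segWL_exit:
  assumes "m 4 = 0" "m 6 = real_of_int p"
  shows "\<exists>m'. run prog (90,m) 3 (101, m') \<and> m' p = 0 \<and> (\<forall>a. a \<notin> {9,p} \<longrightarrow> m' a = m a)"
  using assms by (simp add: S)

lemma segWL_step:
  assumes "m 4 = real x" "x \<noteq> 0" "m 6 = real_of_int p" "p < 0"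
  shows "\<exists>m'. run prog (90,m) 11 (90, m') \<and> m' p = real x \<and> m' 4 = m (4 * int x + 12) \<and> m' 6 = real_of_int (p + 1) \<and>
    (\<forall>a. a \<notin> {4,6,7,9,p} \<longrightarrow> m' a = m a)"
  using assms by (simp add: S)

lemma segH: "run prog (101,m) 2 (103, m(2 := m 8, 3 := m 5))"
  by (simp add: S)

lemma FL_loop:
  assumes "m 4 = real h" "h < t"
    "\<forall>p. h \<le> p \<longrightarrow> p < t \<longrightarrow> m (- 1 - int p) = real (e p) \<and> m (4 * int (e p) + 10) = g p"
    "\<exists>p. h \<le> p \<and> p < t \<and> m 6 - g p \<le> m 1"
  shows "\<exists>h' m'. h \<le> h' \<and> h' < t \<and> m 6 - g h' \<le> m 1 \<and> (\<forall>p. h \<le> p \<longrightarrow> p < h' \<longrightarrow> \<not> m 6 - g p \<le> m 1)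
     \<and> run prog (10, m) (13 * (h' - h) + 10) (23, m') \<and> m' 4 = real h' \<and> (\<forall>a. a \<notin> {4,8,9} \<longrightarrow> m' a = m a)"
  using assms
proof (induction "t - h" arbitrary: h m)
  case 0
  then show ?case by simp
next
  case (Suc x)
  have h1: "m (- 1 - int h) = real (e h)" "m (4 * int (e h) + 10) = g h" using Suc.prems(2,3) by auto
  show ?case
  proof (cases "m 6 - g h \<le> m 1")
    case True
    from segFL_exit[OF Suc.prems(1) h1 True] obtain m' where
      "run prog (10, m) 10 (23, m')" "\<forall>a. a \<notin> {8, 9} \<longrightarrow> m' a = m a" by blast
    then show ?thesis using True Suc.prems by (intro exI[of _ h] exI[of _ m']) auto
  next
    case False
    from segFL_pop[OF Suc.prems(1) h1 False] obtain m1 where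
      m1: "run prog (10, m) 13 (10, m1)" "m1 4 = real (Suc h)" "\<forall>a. a \<notin> {4, 8, 9} \<longrightarrow> m1 a = m a" by blast
    have m16: "m1 6 = m 6" "m1 1 = m 1" using m1(3) by auto
    obtain p0 where p0: "h \<le> p0" "p0 < t" "m 6 - g p0 \<le> m 1" using Suc.prems(4) by blast
    have "p0 \<noteq> h" using p0 False by auto
    then have p0': "Suc h \<le> p0" using p0 by simp
    have ex: "\<exists>p. Suc h \<le> p \<and> p < t \<and> m1 6 - g p \<le> m1 1"
      using p0 p0' m16 by auto
    have st: "Suc h < t" using p0 p0' by simp
    have pr: "\<forall>p. Suc h \<le> p \<longrightarrow> p < t \<longrightarrow> m1 (- 1 - int p) = real (e p) \<and> m1 (4 * int (e p) + 10) = g p"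
      using Suc.prems(3) m1(3) by auto
    have "x = t - Suc h" using Suc.hyps by simp
    from Suc.hyps(1)[OF this m1(2) st pr ex] obtain h' m' where
      IH: "Suc h \<le> h'" "h' < t" "m1 6 - g h' \<le> m1 1" "\<forall>p. Suc h \<le> p \<longrightarrow> p < h' \<longrightarrow> \<not> m1 6 - g p \<le> m1 1"
      "run prog (10, m1) (13 * (h' - Suc h) + 10) (23, m')" "m' 4 = real h'" "\<forall>a. a \<notin> {4, 8, 9} \<longrightarrow> m' a = m1 a"
      by blast
    have T: "13 + (13 * (h' - Suc h) + 10) = 13 * (h' - h) + 10" using IH(1) by simp
    have "run prog (10, m) (13 * (h' - h) + 10) (23, m')"
      using run_trans[OF m1(1) IH(5)] T by simp
    moreover have "\<forall>p. h \<le> p \<longrightarrow> p < h' \<longrightarrow> \<not> m 6 - g p \<le> m 1"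
    proof (intro allI impI)
      fix p assume "h \<le> p" "p < h'"
      then show "\<not> m 6 - g p \<le> m 1" using IH(4) False m16 by (cases "p = h") auto
    qed
    moreover have "\<forall>a. a \<notin> {4,8,9} \<longrightarrow> m' a = m a" using IH(7) m1(3) by simp
    moreover have "h \<le> h'" "m 6 - g h' \<le> m 1" using IH(1,3) m16 by auto
    ultimately show ?thesis using IH(2,6) by blast
  qed
qed

lemma BL_loop:
  assumes "m 4 = real h" "m 5 = real t" "h \<le> t"
    "\<forall>p. h \<le> p \<longrightarrow> p < t \<longrightarrow> m (- 1 - int p) = real (e p) \<and> m (4 * int (e p) + 11) = g p"
  shows "\<exists>t' m' T. h \<le> t' \<and> t' \<le> t \<and> (t' = h \<or> g (t' - 1) \<le> m 8) \<and> (\<forall>p. t' \<le> p \<longrightarrow> p < t \<longrightarrow> \<not> g p \<le> m 8)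
     \<and> run prog (55, m) T (68, m') \<and> T \<le> 13 * (t - t') + 10 \<and> m' 5 = real t' \<and> (\<forall>a. a \<notin> {5,7,9} \<longrightarrow> m' a = m a)"
  using assms
proof (induction t arbitrary: m)
  case 0
  then have "run prog (55, m) 1 (68, m)" using segBL_empty[of m h 0] by simp
  then show ?case using 0 by (intro exI[of _ 0] exI[of _ m] exI[of _ 1]) auto
next
  case (Suc t)
  show ?case
  proof (cases "h = Suc t")
    case True
    then have "run prog (55, m) 1 (68, m)" using segBL_empty[of m h "Suc t"] Suc.prems by simp
    then show ?thesis using True Suc.prems by (intro exI[of _ "Suc t"] exI[of _ m] exI[of _ 1]) auto
  next
    case False
    then have ht: "h < Suc t" "h \<le> t" using Suc.prems by auto
    have h1: "m (- int (Suc t)) = real (e t)" "m (4 * int (e t) + 11) = g t"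
      using Suc.prems(4) ht by (auto simp: algebra_simps)
    show ?thesis
    proof (cases "g t \<le> m 8")
      case True
      from segBL_stop[OF Suc.prems(1,2) ht(1) h1 True] obtain m' where
        "run prog (55, m) 10 (68, m')" "\<forall>a. a \<notin> {7, 9} \<longrightarrow> m' a = m a" by blast
      then show ?thesis using True Suc.prems ht
        by (intro exI[of _ "Suc t"] exI[of _ m'] exI[of _ 10]) auto
    next
      case False
      from segBL_pop[OF Suc.prems(1,2) ht(1) h1 False] obtain m1 where
        m1: "run prog (55, m) 13 (55, m1)" "m1 5 = real t" "\<forall>a. a \<notin> {5, 7, 9} \<longrightarrow> m1 a = m a" by auto
      have pr: "\<forall>p. h \<le> p \<longrightarrow> p < t \<longrightarrow> m1 (- 1 - int p) = real (e p) \<and> m1 (4 * int (e p) + 11) = g p"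
        using Suc.prems(4) m1(3) by auto
      have m14: "m1 4 = real h" "m1 8 = m 8" using m1(3) Suc.prems(1) by auto
      from Suc.IH[OF m14(1) m1(2) ht(2) pr] obtain t' m' T where
        IH: "h \<le> t'" "t' \<le> t" "t' = h \<or> g (t' - 1) \<le> m1 8" "\<forall>p. t' \<le> p \<longrightarrow> p < t \<longrightarrow> \<not> g p \<le> m1 8"
         "run prog (55, m1) T (68, m')" "T \<le> 13 * (t - t') + 10" "m' 5 = real t'"
         "\<forall>a. a \<notin> {5, 7, 9} \<longrightarrow> m' a = m1 a" by blast
      have "run prog (55, m) (13 + T) (68, m')" using run_trans[OF m1(1) IH(5)] .
      moreover have "13 + T \<le> 13 * (Suc t - t') + 10" using IH(2,6) by simp
      moreover have "\<forall>p. t' \<le> p \<longrightarrow> p < Suc t \<longrightarrow> \<not> g p \<le> m 8"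
        using IH(4) False m14 less_Suc_eq by auto
      ultimately show ?thesis using IH m14 m1(3)
        by (intro exI[of _ t'] exI[of _ m'] exI[of _ "13 + T"]) auto
    qed
  qed
qed

function tr :: "(nat \<Rightarrow> nat) \<Rightarrow> nat \<Rightarrow> nat list" where
  "tr pr x = (if x = 0 \<or> x \<le> pr x then [x] else x # tr pr (pr x))"
  by auto
termination by (relation "measure (\<lambda>(pr,x). x)") auto

declare tr.simps[simp del]

lemma tr_0[simp]: "tr pr 0 = [0]" by (simp add: tr.simps)
lemma tr_pos: "x \<noteq> 0 \<Longrightarrow> pr x < x \<Longrightarrow> tr pr x = x # tr pr (pr x)"
  by (subst tr.simps) auto

lemma CL_loop:
  assumes "m 4 = real x" "m 5 = real L" "\<forall>i. 1 \<le> i \<longrightarrow> i \<le> x \<longrightarrow> m (4 * int i + 12) = real (pr i) \<and> pr i < i"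
  shows "\<exists>m' T. run prog (77, m) T (87, m') \<and> T \<le> 10 * x + 2 \<and> m' 5 = real (L + length (tr pr x) - 1)
    \<and> (\<forall>a. a \<notin> {4,5,7,9} \<longrightarrow> m' a = m a)"
  using assms
proof (induction x arbitrary: m L rule: less_induct)
  case (less x)
  show ?case
  proof (cases "x = 0")
    case True
    have r: "run prog (77, m) 2 (87, m(9 := 0))" using segCL_exit[of m] less.prems True by simp
    have "(m(9 := 0)) 5 = real (L + length (tr pr x) - 1)" using less.prems True by simp
    moreover have "\<forall>a. a \<notin> {4,5,7,9} \<longrightarrow> (m(9 := 0)) a = m a" by simp
    moreover have "(2::nat) \<le> 10 * x + 2" by simp
    ultimately show ?thesis using r by blast
  next
    case False
    have px: "m (4 * int x + 12) = real (pr x)" "pr x < x" using less.prems(3) False by auto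
    from segCL_step[OF less.prems(1) False less.prems(2)] obtain m1 where
      m1: "run prog (77, m) 10 (77, m1)" "m1 4 = real (pr x)" "m1 5 = real (Suc L)"
      "\<forall>a. a \<notin> {4, 5, 7, 9} \<longrightarrow> m1 a = m a" using px by auto
    have pr: "\<forall>i. 1 \<le> i \<longrightarrow> i \<le> pr x \<longrightarrow> m1 (4 * int i + 12) = real (pr i) \<and> pr i < i"
      using less.prems(3) m1(4) px(2) by auto
    from less.IH[OF px(2) m1(2,3) pr] obtain m' T where
      IH: "run prog (77, m1) T (87, m')" "T \<le> 10 * pr x + 2" "m' 5 = real (Suc L + length (tr pr (pr x)) - 1)"
      "\<forall>a. a \<notin> {4, 5, 7, 9} \<longrightarrow> m' a = m1 a" by blast
    have "run prog (77, m) (10 + T) (87, m')" using run_trans[OF m1(1) IH(1)] .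
    moreover have "10 + T \<le> 10 * x + 2" using IH(2) px(2) by simp
    moreover have "m' 5 = real (L + length (tr pr x) - 1)" using IH(3) tr_pos[where x=x and pr=pr, OF False px(2)] by simp
    ultimately show ?thesis using IH m1(4) by (intro exI[of _ m'] exI[of _ "10 + T"]) auto
  qed
qed

lemma WL_loop:
  assumes "m 4 = real x" "m 6 = real_of_int p" "p + int (length (tr pr x)) = 0"
    "\<forall>i. 1 \<le> i \<longrightarrow> i \<le> x \<longrightarrow> m (4 * int i + 12) = real (pr i) \<and> pr i < i"
  shows "\<exists>m' T. run prog (90, m) T (101, m') \<and> T \<le> 11 * x + 3
    \<and> (\<forall>k < length (tr pr x). m' (p + int k) = real (tr pr x ! k))
    \<and> (\<forall>a. a \<notin> {4,6,7,9} \<longrightarrow> (a < p \<or> 0 \<le> a) \<longrightarrow> m' a = m a)"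
  using assms
proof (induction x arbitrary: m p rule: less_induct)
  case (less x)
  show ?case
  proof (cases "x = 0")
    case True
    then have p: "p = -1" "m 4 = 0" using less.prems by auto
    from segWL_exit[OF p(2) less.prems(2)] obtain m' where
      "run prog (90, m) 3 (101, m')" "m' p = 0" "\<forall>a. a \<notin> {9, p} \<longrightarrow> m' a = m a" by blast
    then show ?thesis using True p by (intro exI[of _ m'] exI[of _ 3]) auto
  next
    case False
    have px: "m (4 * int x + 12) = real (pr x)" "pr x < x" using less.prems(4) False by auto
    have tx: "tr pr x = x # tr pr (pr x)" using tr_pos[where x=x and pr=pr, OF False px(2)] .
    have p0: "p < 0" using less.prems(3) tx by simp
    from segWL_step[OF less.prems(1) False less.prems(2) p0] obtain m1 where
      m1: "run prog (90, m) 11 (90, m1)" "m1 p = real x" "m1 4 = real (pr x)" "m1 6 = real_of_int (p + 1)"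
      "\<forall>a. a \<notin> {4, 6, 7, 9, p} \<longrightarrow> m1 a = m a" using px by auto
    have pr: "\<forall>i. 1 \<le> i \<longrightarrow> i \<le> pr x \<longrightarrow> m1 (4 * int i + 12) = real (pr i) \<and> pr i < i"
      using less.prems(4) m1(5) px(2) p0 by auto
    have pl: "p + 1 + int (length (tr pr (pr x))) = 0" using less.prems(3) tx by simp
    from less.IH[OF px(2) m1(3,4) pl pr] obtain m' T where
      IH: "run prog (90, m1) T (101, m')" "T \<le> 11 * pr x + 3"
      "\<forall>k < length (tr pr (pr x)). m' (p + 1 + int k) = real (tr pr (pr x) ! k)"
      "\<forall>a. a \<notin> {4,6,7,9} \<longrightarrow> (a < p + 1 \<or> 0 \<le> a) \<longrightarrow> m' a = m1 a" by blast
    have "run prog (90, m) (11 + T) (101, m')" using run_trans[OF m1(1) IH(1)] .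
    moreover have "11 + T \<le> 11 * x + 3" using IH(2) px(2) by simp
    moreover have "\<forall>k < length (tr pr x). m' (p + int k) = real (tr pr x ! k)"
    proof (intro allI impI)
      fix k assume k: "k < length (tr pr x)"
      show "m' (p + int k) = real (tr pr x ! k)"
      proof (cases k)
        case 0
        then show ?thesis using IH(4) m1(2) tx p0 by auto
      next
        case (Suc k')
        then show ?thesis using IH(3) k tx by (auto simp: algebra_simps)
      qed
    qed
    moreover have "\<forall>a. a \<notin> {4,6,7,9} \<longrightarrow> (a < p \<or> 0 \<le> a) \<longrightarrow> m' a = m a"
      using IH(4) m1(5) p0 by auto
    ultimately show ?thesis by (intro exI[of _ m'] exI[of _ "11 + T"]) auto
  qed
qed

definition chain :: "nat \<Rightarrow> real \<Rightarrow> (nat \<Rightarrow> real) \<Rightarrow> nat list \<Rightarrow> bool" where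
  "chain n Q q vs \<longleftrightarrow> (\<forall>k. Suc k < length vs \<longrightarrow> split_arc n Q q (vs ! k) (vs ! Suc k))"

lemma path_cost_single[simp]: "path_cost dd dO dB [x] = 0"
  by (simp add: path_cost_def)

lemma path_cost_Cons2: "path_cost dd dO dB (x # y # r) = arc_cost dd dO dB x y + path_cost dd dO dB (y # r)"
proof -
  have "path_cost dd dO dB (x # y # r) = (\<Sum>k<Suc (length r). arc_cost dd dO dB ((x # y # r) ! k) ((x # y # r) ! Suc k))"
    unfolding path_cost_def by simp
  also have "\<dots> = arc_cost dd dO dB x y + (\<Sum>k<length r. arc_cost dd dO dB ((y # r) ! k) ((y # r) ! Suc k))"
    by (subst sum.lessThan_Suc_shift) simp
  also have "(\<Sum>k<length r. arc_cost dd dO dB ((y # r) ! k) ((y # r) ! Suc k)) = path_cost dd dO dB (y # r)"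
    unfolding path_cost_def by simp
  finally show ?thesis .
qed

lemma chain_Cons2: "chain n Q q (x # y # r) \<longleftrightarrow> split_arc n Q q x y \<and> chain n Q q (y # r)"
proof
  assume c: "chain n Q q (x # y # r)"
  have "split_arc n Q q x y" using c[unfolded chain_def, rule_format, of 0] by simp
  moreover have "chain n Q q (y # r)" unfolding chain_def
  proof (intro allI impI)
    fix k assume "Suc k < length (y # r)"
    then show "split_arc n Q q ((y # r) ! k) ((y # r) ! Suc k)"
      using c[unfolded chain_def, rule_format, of "Suc k"] by simp
  qed
  ultimately show "split_arc n Q q x y \<and> chain n Q q (y # r)" ..
next
  assume c: "split_arc n Q q x y \<and> chain n Q q (y # r)"
  show "chain n Q q (x # y # r)" unfolding chain_def
  proof (intro allI impI)
    fix k assume k: "Suc k < length (x # y # r)"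
    show "split_arc n Q q ((x # y # r) ! k) ((x # y # r) ! Suc k)"
    proof (cases k)
      case 0 then show ?thesis using c by simp
    next
      case (Suc k')
      then show ?thesis using c k unfolding chain_def by simp
    qed
  qed
qed

lemma path_cost_snoc:
  assumes "xs \<noteq> []"
  shows "path_cost dd dO dB (xs @ [y]) = path_cost dd dO dB xs + arc_cost dd dO dB (last xs) y"
proof -
  obtain l where l: "length xs = Suc l" using assms by (cases xs) auto
  have "path_cost dd dO dB (xs @ [y]) = (\<Sum>k<Suc l. arc_cost dd dO dB ((xs @ [y]) ! k) ((xs @ [y]) ! Suc k))"
    unfolding path_cost_def using l by simp
  also have "\<dots> = (\<Sum>k<l. arc_cost dd dO dB ((xs @ [y]) ! k) ((xs @ [y]) ! Suc k))
      + arc_cost dd dO dB ((xs @ [y]) ! l) ((xs @ [y]) ! Suc l)" by simp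
  also have "(\<Sum>k<l. arc_cost dd dO dB ((xs @ [y]) ! k) ((xs @ [y]) ! Suc k))
     = (\<Sum>k<l. arc_cost dd dO dB (xs ! k) (xs ! Suc k))"
    by (rule sum.cong) (auto simp: nth_append l)
  also have "\<dots> = path_cost dd dO dB xs" unfolding path_cost_def using l by simp
  also have "(xs @ [y]) ! l = last xs" using l assms by (simp add: nth_append last_conv_nth)
  also have "(xs @ [y]) ! Suc l = y" using l by (simp add: nth_append)
  finally show ?thesis .
qed

lemma chain_snoc:
  assumes "xs \<noteq> []" "chain n Q q xs" "split_arc n Q q (last xs) y"
  shows "chain n Q q (xs @ [y])"
  unfolding chain_def
proof (intro allI impI)
  fix k assume k: "Suc k < length (xs @ [y])"
  show "split_arc n Q q ((xs @ [y]) ! k) ((xs @ [y]) ! Suc k)"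
  proof (cases "Suc k < length xs")
    case True
    then show ?thesis using assms(2) by (simp add: chain_def nth_append)
  next
    case False
    then have "Suc k = length xs" using k by simp
    then have "k = length xs - 1" by simp
    then show ?thesis using assms \<open>Suc k = length xs\<close> by (simp add: nth_append last_conv_nth)
  qed
qed

lemma lower_bound:
  assumes "\<forall>i k. split_arc n Q q i k \<longrightarrow> V k \<le> V i + arc_cost dd dO dB i k"
  shows "ws \<noteq> [] \<Longrightarrow> chain n Q q ws \<Longrightarrow> V (last ws) - V (hd ws) \<le> path_cost dd dO dB ws"
proof (induction ws rule: induct_list012)
  case (3 x y r)
  then have "split_arc n Q q x y" "chain n Q q (y # r)" by (auto simp: chain_Cons2)
  moreover have "V y \<le> V x + arc_cost dd dO dB x y" using assms calculation(1) by blast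
  moreover have "V (last (y # r)) - V y \<le> path_cost dd dO dB (y # r)" using 3 calculation(2) by simp
  ultimately show ?case by (simp add: path_cost_Cons2)
qed auto

lemma trace_path:
  assumes V0: "V 0 = 0"
    and pr: "\<forall>i. 1 \<le> i \<longrightarrow> i \<le> n \<longrightarrow> pr i < i \<and> split_arc n Q q (pr i) i \<and> V i = V (pr i) + arc_cost dd dO dB (pr i) i"
  shows "x \<le> n \<Longrightarrow> rev (tr pr x) \<noteq> [] \<and> hd (rev (tr pr x)) = 0 \<and> last (rev (tr pr x)) = x \<and>
     chain n Q q (rev (tr pr x)) \<and> path_cost dd dO dB (rev (tr pr x)) = V x"
proof (induction x rule: less_induct)
  case (less x)
  show ?case
  proof (cases "x = 0")
    case True
    then show ?thesis using V0 by (simp add: chain_def)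
  next
    case False
    then have p: "pr x < x" "split_arc n Q q (pr x) x" "V x = V (pr x) + arc_cost dd dO dB (pr x) x"
      using pr less.prems by auto
    have IH: "rev (tr pr (pr x)) \<noteq> [] \<and> hd (rev (tr pr (pr x))) = 0 \<and> last (rev (tr pr (pr x))) = pr x \<and>
     chain n Q q (rev (tr pr (pr x))) \<and> path_cost dd dO dB (rev (tr pr (pr x))) = V (pr x)"
      using less.IH[OF p(1)] p(1) less.prems by simp
    have tx: "rev (tr pr x) = rev (tr pr (pr x)) @ [x]" using tr_pos[where x=x and pr=pr, OF False p(1)] by simp
    show ?thesis unfolding tx using IH p
      by (simp add: path_cost_snoc chain_snoc)
  qed
qed

lemma opt_path:
  assumes V0: "V 0 = 0"
    and pr: "\<forall>i. 1 \<le> i \<longrightarrow> i \<le> n \<longrightarrow> pr i < i \<and> split_arc n Q q (pr i) i \<and> V i = V (pr i) + arc_cost dd dO dB (pr i) i"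
    and lb: "\<forall>i k. split_arc n Q q i k \<longrightarrow> V k \<le> V i + arc_cost dd dO dB i k"
  shows "min_split_path n Q q dd dO dB (rev (tr pr n)) \<and> path_cost dd dO dB (rev (tr pr n)) = V n"
proof -
  note T = trace_path[OF V0 pr order_refl]
  have "is_split_path n Q q (rev (tr pr n))" using T by (simp add: is_split_path_def chain_def)
  moreover have "path_cost dd dO dB (rev (tr pr n)) \<le> path_cost dd dO dB ws" if "is_split_path n Q q ws" for ws
  proof -
    have "ws \<noteq> []" "chain n Q q ws" "hd ws = 0" "last ws = n" using that by (auto simp: is_split_path_def chain_def)
    then show ?thesis using lower_bound[OF lb] T V0 by force
  qed
  ultimately show ?thesis using T by (simp add: min_split_path_def)
qed

lemma addr_neq[simp]:
  "4 * int a + 10 \<noteq> 4 * int b + 11" "4 * int a + 10 \<noteq> 4 * int b + 12" "4 * int a + 10 \<noteq> 4 * int b + 13"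
  "4 * int a + 11 \<noteq> 4 * int b + 10" "4 * int a + 11 \<noteq> 4 * int b + 12" "4 * int a + 11 \<noteq> 4 * int b + 13"
  "4 * int a + 12 \<noteq> 4 * int b + 10" "4 * int a + 12 \<noteq> 4 * int b + 11" "4 * int a + 12 \<noteq> 4 * int b + 13"
  "4 * int a + 13 \<noteq> 4 * int b + 10" "4 * int a + 13 \<noteq> 4 * int b + 11" "4 * int a + 13 \<noteq> 4 * int b + 12"
  by presburger+

locale inst =
  fixes n :: nat and Q :: real and q dd dO dB :: "nat \<Rightarrow> real"
  assumes n1: "1 \<le> n" and Q0: "0 \<le> Q" and qb: "\<forall>i\<in>{1..n}. 0 \<le> q i \<and> q i \<le> Q"
begin

abbreviation "im \<equiv> init_mem n Q q dd dO dB"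
abbreviation "Qp \<equiv> Qpre q"
abbreviation "Dp \<equiv> Dpre dd"
abbreviation "arc \<equiv> split_arc n Q q"
abbreviation "cst \<equiv> arc_cost dd dO dB"
definition "aa i = dO (Suc i) - Dp (Suc i)"

lemma im_rec:
  assumes "1 \<le> i" "i \<le> n" "0 \<le> r" "r \<le> 3"
  shows "im (4 * int i + 10 + r) = (if r = 0 then q i else if r = 1 then (if i < n then dd i else 0)
          else if r = 2 then dO i else dB i)"
proof -
  have d: "(4 * int i + 10 + r - 10) div 4 = int i" "(4 * int i + 10 + r - 10) mod 4 = r" using assms by presburger+
  show ?thesis using assms unfolding init_mem_def Let_def d by auto
qed

lemma im_q: "1 \<le> i \<Longrightarrow> i \<le> n \<Longrightarrow> im (4 * int i + 10) = q i"
  using im_rec[of i 0] by simp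
lemma im_dd: "1 \<le> i \<Longrightarrow> i < n \<Longrightarrow> im (4 * int i + 11) = dd i"
  using im_rec[of i 1] by (simp add: add.assoc)
lemma im_dO: "1 \<le> i \<Longrightarrow> i \<le> n \<Longrightarrow> im (4 * int i + 12) = dO i"
  using im_rec[of i 2] by (simp add: add.assoc)
lemma im_dB: "1 \<le> i \<Longrightarrow> i \<le> n \<Longrightarrow> im (4 * int i + 13) = dB i"
  using im_rec[of i 3] by (simp add: add.assoc)
lemma im_dO': "Suc i \<le> n \<Longrightarrow> im (4 * int i + 16) = dO (Suc i)"
  using im_dO[of "Suc i"] by (simp add: algebra_simps)

lemma im_small: "im 0 = real n" "im 1 = Q" "im 2 = 0" "im 3 = 0" "im 4 = 0" "im 6 = 0" "im 10 = 0" "im 13 = 0"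
  "im (-1) = 0"
  by (simp_all add: init_mem_def)

lemma im_16: "im 16 = dO 1" using im_dO[of 1] n1 by simp

lemma Qp_0[simp]: "Qp 0 = 0" by (simp add: Qpre_def)
lemma Qp_Suc: "Qp (Suc i) = Qp i + q (Suc i)" by (simp add: Qpre_def)
lemma Qp_mono: "i \<le> k \<Longrightarrow> k \<le> n \<Longrightarrow> Qp i \<le> Qp k"
proof (induction k)
  case 0 then show ?case by simp
next
  case (Suc k)
  then show ?case using qb by (cases "i = Suc k") (auto simp: Qp_Suc intro: add_increasing2)
qed
lemma Dp_1[simp]: "Dp (Suc 0) = 0" by (simp add: Dpre_def)
lemma Dp_Suc: "1 \<le> j \<Longrightarrow> Dp (Suc j) = Dp j + dd j" by (simp add: Dpre_def)

lemma cst_eq: "cst i k = aa i + (Dp k + dB k)"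
  by (simp add: arc_cost_def aa_def)

end

context inst begin

definition Inv :: "nat \<Rightarrow> nat \<Rightarrow> nat \<Rightarrow> (int \<Rightarrow> real) \<Rightarrow> bool" where
 "Inv j h t m \<longleftrightarrow> 1 \<le> j \<and> j \<le> n \<and> m 0 = real n \<and> m 1 = Q \<and> m 2 = real j \<and> m 3 = Dp j \<and>
   m 4 = real h \<and> m 5 = real t \<and> m 6 = Qp (j - 1) \<and>
   (\<forall>a. 4 * int j + 10 \<le> a \<longrightarrow> m a = im a) \<and>
   (\<forall>i<j. m (4 * int i + 10) = Qp i \<and> m (4 * int i + 11) = m (4 * int i + 13) + aa i) \<and> m 13 = 0 \<and>
   (\<forall>i. 1 \<le> i \<longrightarrow> i < j \<longrightarrow> (\<exists>p. m (4 * int i + 12) = real p \<and> p < i \<and> arc p i \<and>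
       m (4 * int i + 13) = m (4 * int p + 13) + cst p i)) \<and>
   (\<forall>i k. i < k \<longrightarrow> k < j \<longrightarrow> arc i k \<longrightarrow> m (4 * int k + 13) \<le> m (4 * int i + 13) + cst i k) \<and>
   h < t \<and> t \<le> j \<and>
   (\<exists>e. (\<forall>p. h \<le> p \<longrightarrow> p < t \<longrightarrow> m (- 1 - int p) = real (e p) \<and> e p < j) \<and>
      (\<forall>p p'. h \<le> p \<longrightarrow> p < p' \<longrightarrow> p' < t \<longrightarrow> e p < e p' \<and> m (4 * int (e p) + 11) \<le> m (4 * int (e p') + 11)) \<and>
      e (t - 1) = j - 1 \<and>
      (\<forall>i<j. Qp (j - 1) - Qp i \<le> Q \<longrightarrow>
         (\<exists>p. h \<le> p \<and> p < t \<and> i \<le> e p \<and> m (4 * int (e p) + 11) \<le> m (4 * int i + 11))))"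

definition Post :: "(int \<Rightarrow> real) \<Rightarrow> bool" where
 "Post m \<longleftrightarrow> m 0 = real n \<and> m 8 = m (4 * int n + 13) \<and> m 13 = 0 \<and>
   (\<forall>i. 1 \<le> i \<longrightarrow> i \<le> n \<longrightarrow> (\<exists>p. m (4 * int i + 12) = real p \<and> p < i \<and> arc p i \<and>
       m (4 * int i + 13) = m (4 * int p + 13) + cst p i)) \<and>
   (\<forall>i k. arc i k \<longrightarrow> m (4 * int k + 13) \<le> m (4 * int i + 13) + cst i k)"

lemma init_Inv:
  shows "Inv 1 0 1 (im(11 := im 16, 5 := 1, 2 := 1))"
proof -
  have a: "\<forall>a. 14 \<le> a \<longrightarrow> (im(11 := im 16, 5 := 1, 2 := 1)) a = im a" by simp
  show ?thesis
    unfolding Inv_def using n1 a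
    apply (simp add: im_small im_16 aa_def Dpre_def)
    apply (rule exI[of _ "\<lambda>_. 0"])
    apply (simp add: im_small)
    done
qed

end

context inst begin

lemma iter:
  assumes inv: "Inv j h t m"
  shows "(j = n \<longrightarrow> (\<exists>m' T. run prog (3, m) T (75, m') \<and> T \<le> 37 + 13 * (t - h) \<and> Post m')) \<and>
         (j < n \<longrightarrow> (\<exists>m' T h' t'. run prog (3, m) T (3, m') \<and> Inv (Suc j) h' t' m' \<and>
              T + 13 * (t' - h') \<le> 79 + 13 * (t - h)))"
proof -
  have j1: "1 \<le> j" and jn: "j \<le> n" and r0: "m 0 = real n" and r1: "m 1 = Q" and r2: "m 2 = real j"
    and r3: "m 3 = Dp j" and r4: "m 4 = real h" and r5: "m 5 = real t" and r6: "m 6 = Qp (j - 1)"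
    and unt: "\<forall>a. 4 * int j + 10 \<le> a \<longrightarrow> m a = im a"
    and recs: "\<forall>i<j. m (4 * int i + 10) = Qp i \<and> m (4 * int i + 11) = m (4 * int i + 13) + aa i"
    and m13: "m 13 = 0"
    and preds: "\<forall>i. 1 \<le> i \<longrightarrow> i < j \<longrightarrow> (\<exists>p. m (4 * int i + 12) = real p \<and> p < i \<and> arc p i \<and>
       m (4 * int i + 13) = m (4 * int p + 13) + cst p i)"
    and arcs: "\<forall>i k. i < k \<longrightarrow> k < j \<longrightarrow> arc i k \<longrightarrow> m (4 * int k + 13) \<le> m (4 * int i + 13) + cst i k"
    and ht: "h < t" and tj: "t \<le> j"
    using inv unfolding Inv_def by blast+
  obtain e where
    E1: "\<forall>p. h \<le> p \<longrightarrow> p < t \<longrightarrow> m (- 1 - int p) = real (e p) \<and> e p < j" and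
    E2: "\<forall>p p'. h \<le> p \<longrightarrow> p < p' \<longrightarrow> p' < t \<longrightarrow> e p < e p' \<and> m (4 * int (e p) + 11) \<le> m (4 * int (e p') + 11)" and
    E3: "e (t - 1) = j - 1" and
    E4: "\<forall>i<j. Qp (j - 1) - Qp i \<le> Q \<longrightarrow>
         (\<exists>p. h \<le> p \<and> p < t \<and> i \<le> e p \<and> m (4 * int (e p) + 11) \<le> m (4 * int i + 11))"
    using inv unfolding Inv_def by blast
  have qj: "m (4 * int j + 10) = q j" using unt im_q[OF j1 jn] by simp
  have QPj: "Qp (j - 1) + q j = Qp j" using j1 Qp_Suc[of "j - 1"] by simp
  have qjQ: "q j \<le> Q" using qb j1 jn by auto

  obtain m1 where B1: "run prog (3, m) 7 (10, m1)" and B2: "m1 6 = Qp j" and B3: "m1 (4 * int j + 10) = Qp j"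
    and B4: "m1 7 = 4 * real j + 10" and B5: "\<forall>a. a \<notin> {6,7,8,4 * int j + 10} \<longrightarrow> m1 a = m a"
    using segB[OF r2 r6 qj] QPj by auto

  have fl3: "\<forall>p. h \<le> p \<longrightarrow> p < t \<longrightarrow> m1 (- 1 - int p) = real (e p) \<and> m1 (4 * int (e p) + 10) = Qp (e p)"
  proof (intro allI impI)
    fix p assume p: "h \<le> p" "p < t"
    then have "e p < j" using E1 by auto
    then show "m1 (- 1 - int p) = real (e p) \<and> m1 (4 * int (e p) + 10) = Qp (e p)"
      using p E1 recs B5 by auto
  qed
  have t1: "h \<le> t - 1" "t - 1 < t" using ht by auto
  have fl4: "\<exists>p. h \<le> p \<and> p < t \<and> m1 6 - Qp (e p) \<le> m1 1"
    using t1 E3 B2 B5 r1 QPj qjQ by (intro exI[of _ "t - 1"]) auto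
  obtain h' m2 where F1: "h \<le> h'" and F2: "h' < t" and F3: "m1 6 - Qp (e h') \<le> m1 1"
    and F4: "\<forall>p. h \<le> p \<longrightarrow> p < h' \<longrightarrow> \<not> m1 6 - Qp (e p) \<le> m1 1"
    and F5: "run prog (10, m1) (13 * (h' - h) + 10) (23, m2)" and F6: "m2 4 = real h'"
    and F7: "\<forall>a. a \<notin> {4,8,9} \<longrightarrow> m2 a = m1 a"
    using FL_loop[of m1 h t e "\<lambda>p. Qp (e p)", OF _ ht fl3 fl4] B5 r4 by auto
  have m11: "m1 1 = Q" using B5 r1 by simp
  define eh where "eh = e h'"
  have ehj: "eh < j" using E1 F1 F2 eh_def by auto
  have arc_eh: "arc eh j" using F3 B2 m11 ehj jn unfolding split_arc_def eh_def by auto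
  define fe where "fe = m (4 * int eh + 11)"
  define Vj where "Vj = fe + dB j + Dp j"
  have Vj_eq: "Vj = m (4 * int eh + 13) + cst eh j"
    using recs ehj unfolding Vj_def fe_def cst_eq by auto

  have dom: "\<forall>i<j. Qp j - Qp i \<le> Q \<longrightarrow>
         (\<exists>p. h' \<le> p \<and> p < t \<and> i \<le> e p \<and> m (4 * int (e p) + 11) \<le> m (4 * int i + 11))"
  proof (intro allI impI)
    fix i assume i: "i < j" "Qp j - Qp i \<le> Q"
    have "Qp (j - 1) \<le> Qp j" using Qp_mono[of "j - 1" j] jn by simp
    then have "Qp (j - 1) - Qp i \<le> Q" using i by linarith
    then obtain p where p: "h \<le> p" "p < t" "i \<le> e p" "m (4 * int (e p) + 11) \<le> m (4 * int i + 11)"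
      using E4 i(1) by blast
    have "h' \<le> p"
    proof (rule ccontr)
      assume "\<not> h' \<le> p"
      then have "\<not> m1 6 - Qp (e p) \<le> m1 1" using F4 p by auto
      moreover have "Qp i \<le> Qp (e p)" using Qp_mono[of i "e p"] p E1 jn by auto
      ultimately show False using i B2 m11 by auto
    qed
    then show "\<exists>p. h' \<le> p \<and> p < t \<and> i \<le> e p \<and> m (4 * int (e p) + 11) \<le> m (4 * int i + 11)"
      using p by blast
  qed
  have front_min: "\<forall>p. h' \<le> p \<longrightarrow> p < t \<longrightarrow> fe \<le> m (4 * int (e p) + 11)"
    using E2 F1 unfolding fe_def eh_def by (metis le_eq_less_or_eq order_refl)
  have key3: "\<forall>i<j. arc i j \<longrightarrow> Vj \<le> m (4 * int i + 13) + cst i j"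
  proof (intro allI impI)
    fix i assume i: "i < j" "arc i j"
    then have "Qp j - Qp i \<le> Q" by (simp add: split_arc_def)
    then obtain p where "h' \<le> p" "p < t" "m (4 * int (e p) + 11) \<le> m (4 * int i + 11)" using dom i by blast
    then have "fe \<le> m (4 * int i + 11)" using front_min by force
    then show "Vj \<le> m (4 * int i + 13) + cst i j" using recs i unfolding Vj_def cst_eq by auto
  qed

  have c2: "m2 (- 1 - int h') = real eh" using F7 B5 E1 F1 F2 eh_def by auto
  have c3: "m2 7 = 4 * real j + 10" using F7 B4 by simp
  have c4: "m2 (4 * int eh + 11) = fe" using F7 B5 ehj fe_def by auto
  have c5: "m2 (4 * int j + 13) = dB j" using F7 B5 unt im_dB[OF j1 jn] by auto
  have c6: "m2 3 = Dp j" "m2 2 = real j" "m2 0 = real n" using F7 B5 r3 r2 r0 by auto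
  obtain m3 where C1: "run prog (23, m2) 20 (if n \<le> j then 75 else 43, m3)" and C2: "m3 8 = Vj"
    and C3: "m3 (4 * int j + 12) = real eh" and C4: "m3 (4 * int j + 13) = Vj"
    and C5: "\<forall>a. a \<notin> {8,9,4 * int j + 12,4 * int j + 13} \<longrightarrow> m3 a = m2 a"
    using segC[OF F6 c2 c3 c4 c5 c6] unfolding Vj_def by auto
  have R3: "run prog (3, m) (37 + 13 * (h' - h)) (if n \<le> j then 75 else 43, m3)"
    using run_trans[OF run_trans[OF B1 F5] C1] by (simp add: algebra_simps)
  have fr3: "\<forall>a. a \<notin> {4,6,7,8,9,4 * int j + 10,4 * int j + 12,4 * int j + 13} \<longrightarrow> m3 a = m a"
    using C5 F7 B5 by auto

  show ?thesis
  proof (intro conjI impI)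
    assume jeq: "j = n"
    have "Post m3"
      unfolding Post_def
    proof (intro conjI allI impI)
      show "m3 0 = real n" using fr3 r0 by simp
      show "m3 8 = m3 (4 * int n + 13)" using C2 C4 jeq by simp
      show "m3 13 = 0" using fr3 m13 j1 by auto
    next
      fix i assume i: "1 \<le> i" "i \<le> n"
      show "\<exists>p. m3 (4 * int i + 12) = real p \<and> p < i \<and> arc p i \<and> m3 (4 * int i + 13) = m3 (4 * int p + 13) + cst p i"
      proof (cases "i = n")
        case True
        then show ?thesis using C3 C4 Vj_eq ehj arc_eh jeq fr3 by (intro exI[of _ eh]) auto
      next
        case False
        then obtain p where "m (4 * int i + 12) = real p" "p < i" "arc p i" "m (4 * int i + 13) = m (4 * int p + 13) + cst p i"
          using preds i jeq by auto
        then show ?thesis using fr3 i False jeq by (intro exI[of _ p]) auto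
      qed
    next
      fix i k assume ik: "arc i k"
      then have ik2: "i < k" "k \<le> n" by (auto simp: split_arc_def)
      show "m3 (4 * int k + 13) \<le> m3 (4 * int i + 13) + cst i k"
      proof (cases "k = n")
        case True
        then show ?thesis using key3 ik ik2 C4 fr3 jeq by auto
      next
        case False
        then show ?thesis using arcs ik ik2 fr3 jeq by auto
      qed
    qed
    then show "\<exists>m' T. run prog (3, m) T (75, m') \<and> T \<le> 37 + 13 * (t - h) \<and> Post m'"
      using R3 jeq F2 by (intro exI[of _ m3] exI[of _ "37 + 13 * (h' - h)"]) auto
  next
    assume jlt: "j < n"
    have R3': "run prog (3, m) (37 + 13 * (h' - h)) (43, m3)" using R3 jlt by simp
    have d1: "m3 7 = 4 * real j + 10" using fr3 B4 C5 F7 by simp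
    have d2: "m3 (4 * int j + 11) = dd j" using fr3 unt im_dd[OF j1 jlt] by auto
    have d3: "m3 (4 * int j + 16) = dO (Suc j)" using fr3 unt im_dO'[of j] jlt by auto
    have d4: "m3 3 = Dp j" using fr3 r3 by simp
    obtain m4 where D1: "run prog (43, m3) 12 (55, m4)" and D2: "m4 3 = Dp j + dd j"
      and D3: "m4 8 = Vj + dO (Suc j) - (Dp j + dd j)" and D4: "m4 (4 * int j + 11) = Vj + dO (Suc j) - (Dp j + dd j)"
      and D5: "\<forall>a. a \<notin> {3,8,9,4 * int j + 11} \<longrightarrow> m4 a = m3 a"
      using segD[OF d1 d2 d3 d4 C2] by blast
    define fj where "fj = Vj + dO (Suc j) - (Dp j + dd j)"
    have fj_eq: "fj = Vj + aa j" unfolding fj_def aa_def using Dp_Suc[OF j1] by simp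
    have fr4: "\<forall>a. a \<notin> {3,4,6,7,8,9,4 * int j + 10,4 * int j + 11,4 * int j + 12,4 * int j + 13} \<longrightarrow> m4 a = m a"
      using D5 fr3 by auto
    have b1: "m4 4 = real h'" using D5 C5 F6 by simp
    have b2: "m4 5 = real t" using fr4 r5 by simp
    have b3: "h' \<le> t" using F2 by simp
    have b4: "\<forall>p. h' \<le> p \<longrightarrow> p < t \<longrightarrow> m4 (- 1 - int p) = real (e p) \<and> m4 (4 * int (e p) + 11) = m (4 * int (e p) + 11)"
    proof (intro allI impI)
      fix p assume p: "h' \<le> p" "p < t"
      then have "e p < j" "m (- 1 - int p) = real (e p)" using E1 F1 by auto
      then show "m4 (- 1 - int p) = real (e p) \<and> m4 (4 * int (e p) + 11) = m (4 * int (e p) + 11)"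
        using fr4 by auto
    qed
    obtain t'' m5 T5 where G1: "h' \<le> t''" and G2: "t'' \<le> t"
      and G3: "t'' = h' \<or> m (4 * int (e (t'' - 1)) + 11) \<le> m4 8"
      and G4: "\<forall>p. t'' \<le> p \<longrightarrow> p < t \<longrightarrow> \<not> m (4 * int (e p) + 11) \<le> m4 8"
      and G5: "run prog (55, m4) T5 (68, m5)" and G6: "T5 \<le> 13 * (t - t'') + 10"
      and G7: "m5 5 = real t''" and G8: "\<forall>a. a \<notin> {5,7,9} \<longrightarrow> m5 a = m4 a"
      using BL_loop[of m4 h' t e "\<lambda>p. m (4 * int (e p) + 11)", OF b1 b2 b3 b4] by blast
    have m4_8: "m4 8 = fj" using D3 fj_def by simp
    have e2: "m5 2 = real j" using G8 fr4 r2 by simp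
    obtain m6 where E1': "run prog (68, m5) 7 (3, m6)" and E2': "m6 5 = real (Suc t'')"
      and E3': "m6 2 = real (Suc j)" and E4': "m6 (- 1 - int t'') = real j"
      and E5': "\<forall>a. a \<notin> {2,5,9,- 1 - int t''} \<longrightarrow> m6 a = m5 a"
      using segE[OF G7 e2] by blast
    have fr6: "\<forall>a. a \<notin> {2,3,4,5,6,7,8,9,4 * int j + 10,4 * int j + 11,4 * int j + 12,4 * int j + 13,- 1 - int t''}
        \<longrightarrow> m6 a = m a"
      using E5' G8 fr4 by auto
    have RT: "run prog (3, m) (37 + 13 * (h' - h) + 12 + T5 + 7) (3, m6)"
      using run_trans[OF run_trans[OF run_trans[OF R3' D1] G5] E1'] .
    have v: "m6 0 = real n" "m6 1 = Q" "m6 3 = Dp (Suc j)" "m6 4 = real h'" "m6 6 = Qp j"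
      "m6 (4 * int j + 10) = Qp j" "m6 (4 * int j + 11) = fj" "m6 (4 * int j + 12) = real eh"
      "m6 (4 * int j + 13) = Vj"
      using E5' G8 D5 D2 C5 C3 C4 F7 B5 B2 B3 F6 r0 r1 Dp_Suc[OF j1] fj_def D4 by auto
    have old: "\<And>i. i < j \<Longrightarrow> m6 (4 * int i + 10) = m (4 * int i + 10) \<and> m6 (4 * int i + 11) = m (4 * int i + 11)
       \<and> m6 (4 * int i + 12) = m (4 * int i + 12) \<and> m6 (4 * int i + 13) = m (4 * int i + 13)"
      using fr6 by auto
    have new_inv: "Inv (Suc j) h' (Suc t'') m6"
      unfolding Inv_def
    proof (intro conjI)
      show "1 \<le> Suc j" "Suc j \<le> n" using jlt by auto
      show "m6 0 = real n" "m6 1 = Q" "m6 2 = real (Suc j)" "m6 3 = Dp (Suc j)" "m6 4 = real h'"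
        "m6 5 = real (Suc t'')" "m6 6 = Qp (Suc j - 1)" using v E3' E2' by auto
      show "\<forall>a. 4 * int (Suc j) + 10 \<le> a \<longrightarrow> m6 a = im a"
        using fr6 unt by auto
      show "\<forall>i<Suc j. m6 (4 * int i + 10) = Qp i \<and> m6 (4 * int i + 11) = m6 (4 * int i + 13) + aa i"
      proof (intro allI impI)
        fix i assume "i < Suc j"
        then consider "i < j" | "i = j" by linarith
        then show "m6 (4 * int i + 10) = Qp i \<and> m6 (4 * int i + 11) = m6 (4 * int i + 13) + aa i"
        proof cases
          case 1 then show ?thesis using old[OF 1] recs by auto
        next
          case 2 then show ?thesis using v fj_eq by simp
        qed
      qed
      show "m6 13 = 0" using fr6 m13 j1 by auto
      show "\<forall>i. 1 \<le> i \<longrightarrow> i < Suc j \<longrightarrow> (\<exists>p. m6 (4 * int i + 12) = real p \<and> p < i \<and> arc p i \<and>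
       m6 (4 * int i + 13) = m6 (4 * int p + 13) + cst p i)"
      proof (intro allI impI)
        fix i assume i: "1 \<le> i" "i < Suc j"
        show "\<exists>p. m6 (4 * int i + 12) = real p \<and> p < i \<and> arc p i \<and> m6 (4 * int i + 13) = m6 (4 * int p + 13) + cst p i"
        proof (cases "i = j")
          case True
          then show ?thesis using v old[OF ehj] Vj_eq ehj arc_eh by (intro exI[of _ eh]) auto
        next
          case False
          then have ij: "i < j" using i by simp
          then obtain p where p: "m (4 * int i + 12) = real p" "p < i" "arc p i" "m (4 * int i + 13) = m (4 * int p + 13) + cst p i"
            using preds i by auto
          have "p < j" using p ij by simp
          then show ?thesis using p old[OF ij] old[of p] by (intro exI[of _ p]) auto
        qed
      qed
      show "\<forall>i k. i < k \<longrightarrow> k < Suc j \<longrightarrow> arc i k \<longrightarrow> m6 (4 * int k + 13) \<le> m6 (4 * int i + 13) + cst i k"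
      proof (intro allI impI)
        fix i k assume ik: "i < k" "k < Suc j" "arc i k"
        show "m6 (4 * int k + 13) \<le> m6 (4 * int i + 13) + cst i k"
        proof (cases "k = j")
          case True
          then show ?thesis using key3 ik v old[of i] by auto
        next
          case False
          then have "k < j" using ik by simp
          then show ?thesis using arcs ik old[of i] old[of k] by auto
        qed
      qed
      show "h' < Suc t''" "Suc t'' \<le> Suc j" using G1 G2 tj by auto
      define e' where "e' = e(t'' := j)"
      have e'a: "\<And>p. p < t'' \<Longrightarrow> e' p = e p" "e' t'' = j" unfolding e'_def by auto
      have F6e: "\<And>p. h' \<le> p \<Longrightarrow> p < t'' \<Longrightarrow> m6 (4 * int (e p) + 11) = m (4 * int (e p) + 11) \<and> e p < j"
      proof -
        fix p assume "h' \<le> p" "p < t''"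
        then have "e p < j" using E1 F1 G2 by auto
        then show "m6 (4 * int (e p) + 11) = m (4 * int (e p) + 11) \<and> e p < j" using old by auto
      qed
      show "\<exists>e. (\<forall>p. h' \<le> p \<longrightarrow> p < Suc t'' \<longrightarrow> m6 (- 1 - int p) = real (e p) \<and> e p < Suc j) \<and>
      (\<forall>p p'. h' \<le> p \<longrightarrow> p < p' \<longrightarrow> p' < Suc t'' \<longrightarrow> e p < e p' \<and> m6 (4 * int (e p) + 11) \<le> m6 (4 * int (e p') + 11)) \<and>
      e (Suc t'' - 1) = Suc j - 1 \<and>
      (\<forall>i<Suc j. Qp (Suc j - 1) - Qp i \<le> Q \<longrightarrow>
         (\<exists>p. h' \<le> p \<and> p < Suc t'' \<and> i \<le> e p \<and> m6 (4 * int (e p) + 11) \<le> m6 (4 * int i + 11)))"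
      proof (rule exI[of _ e'], intro conjI)
        show "\<forall>p. h' \<le> p \<longrightarrow> p < Suc t'' \<longrightarrow> m6 (- 1 - int p) = real (e' p) \<and> e' p < Suc j"
        proof (intro allI impI)
        fix p assume p: "h' \<le> p" "p < Suc t''"
        show "m6 (- 1 - int p) = real (e' p) \<and> e' p < Suc j"
        proof (cases "p = t''")
          case True then show ?thesis using E4' e'a by simp
        next
          case False
          then have pt: "p < t''" using p by simp
          then have "m (- 1 - int p) = real (e p)" "e p < j" using E1 p F1 G2 by auto
          then show ?thesis using fr6 pt e'a by auto
        qed
        qed
      next
        show "\<forall>p p'. h' \<le> p \<longrightarrow> p < p' \<longrightarrow> p' < Suc t'' \<longrightarrow> e' p < e' p' \<and> m6 (4 * int (e' p) + 11) \<le> m6 (4 * int (e' p') + 11)"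
        proof (intro allI impI)
        fix p p' assume pp: "h' \<le> p" "p < p'" "p' < Suc t''"
        then have pt: "p < t''" by simp
        show "e' p < e' p' \<and> m6 (4 * int (e' p) + 11) \<le> m6 (4 * int (e' p') + 11)"
        proof (cases "p' = t''")
          case True
          have g3: "m (4 * int (e (t'' - 1)) + 11) \<le> fj" using G3 m4_8 pt pp by auto
          have "m (4 * int (e p) + 11) \<le> m (4 * int (e (t'' - 1)) + 11)"
          proof (cases "p = t'' - 1")
            case True then show ?thesis by simp
          next
            case False
            then show ?thesis using E2 pp pt F1 G2 by auto
          qed
          then show ?thesis using True g3 F6e[OF pp(1) pt] e'a pt v by auto
        next
          case False
          then have "p' < t''" using pp by simp
          then show ?thesis using E2 pp F1 G2 F6e[OF pp(1) pt] F6e[of p'] e'a by auto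
        qed
        qed
      next
        show "e' (Suc t'' - 1) = Suc j - 1" using e'a by simp
      next
        show "\<forall>i<Suc j. Qp (Suc j - 1) - Qp i \<le> Q \<longrightarrow>
         (\<exists>p. h' \<le> p \<and> p < Suc t'' \<and> i \<le> e' p \<and> m6 (4 * int (e' p) + 11) \<le> m6 (4 * int i + 11))"
        proof (intro allI impI)
        fix i assume i: "i < Suc j" "Qp (Suc j - 1) - Qp i \<le> Q"
        show "\<exists>p. h' \<le> p \<and> p < Suc t'' \<and> i \<le> e' p \<and> m6 (4 * int (e' p) + 11) \<le> m6 (4 * int i + 11)"
        proof (cases "i = j")
          case True then show ?thesis using G1 e'a by (intro exI[of _ t'']) auto
        next
          case False
          then have ij: "i < j" using i by simp
          obtain p where p: "h' \<le> p" "p < t" "i \<le> e p" "m (4 * int (e p) + 11) \<le> m (4 * int i + 11)"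
            using dom ij i by auto
          show ?thesis
          proof (cases "p < t''")
            case True
            then show ?thesis using p F6e[OF p(1) True] e'a old[OF ij] by (intro exI[of _ p]) auto
          next
            case False
            then have "\<not> m (4 * int (e p) + 11) \<le> fj" using G4 p m4_8 by auto
            then have "fj \<le> m (4 * int i + 11)" using p by auto
            moreover have "i \<le> j" using ij by simp
            ultimately show ?thesis using G1 e'a v old[OF ij] by (intro exI[of _ t'']) auto
          qed
        qed
        qed
      qed
    qed
    have "37 + 13 * (h' - h) + 12 + T5 + 7 + 13 * (Suc t'' - h') \<le> 79 + 13 * (t - h)"
      using G6 F1 G1 G2 by simp
    then show "\<exists>m' T h' t'. run prog (3, m) T (3, m') \<and> Inv (Suc j) h' t' m' \<and> T + 13 * (t' - h') \<le> 79 + 13 * (t - h)"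
      using RT new_inv by blast
  qed
qed

end

lemma runs_in_of_run: "run P (0, m) t (pc, m') \<Longrightarrow> halted P (pc, m') \<Longrightarrow> runs_in P m t m'"
  unfolding run_def runs_in_def by auto

context inst begin

lemma main_loop:
  "Inv j h t m \<Longrightarrow> \<exists>m' T. run prog (3, m) T (75, m') \<and> T \<le> 80 * (n - j) + 13 * (t - h) + 37 \<and> Post m'"
proof (induction "n - j" arbitrary: j h t m)
  case 0
  then have "j = n" unfolding Inv_def by simp
  then show ?case using iter[OF 0(2)] by fastforce
next
  case (Suc x)
  then have jn: "j < n" unfolding Inv_def by auto
  obtain m1 T h' t' where A: "run prog (3, m) T (3, m1)" "Inv (Suc j) h' t' m1" "T + 13 * (t' - h') \<le> 79 + 13 * (t - h)"
    using iter[OF Suc(3)] jn by blast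
  have "x = n - Suc j" using Suc(2) by simp
  from Suc(1)[OF this A(2)] obtain m' T' where
    B: "run prog (3, m1) T' (75, m')" "T' \<le> 80 * (n - Suc j) + 13 * (t' - h') + 37" "Post m'" by blast
  have "run prog (3, m) (T + T') (75, m')" using run_trans[OF A(1) B(1)] .
  moreover have "T + T' \<le> 80 * (n - j) + 13 * (t - h) + 37" using A(3) B(2) jn by simp
  ultimately show ?case using B(3) by blast
qed

lemma out_phase:
  assumes P: "Post m"
  shows "\<exists>m' T. run prog (75, m) T (103, m') \<and> T \<le> 21 * n + 12 \<and> output_ok n Q q dd dO dB m'"
proof -
  have p0: "m 0 = real n" and p8: "m 8 = m (4 * int n + 13)" and p13: "m 13 = 0"
    and preds: "\<forall>i. 1 \<le> i \<longrightarrow> i \<le> n \<longrightarrow> (\<exists>p. m (4 * int i + 12) = real p \<and> p < i \<and> arc p i \<and>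
       m (4 * int i + 13) = m (4 * int p + 13) + cst p i)"
    and arcs: "\<forall>i k. arc i k \<longrightarrow> m (4 * int k + 13) \<le> m (4 * int i + 13) + cst i k"
    using P unfolding Post_def by blast+
  define V where "V i = m (4 * int i + 13)" for i
  define pr where "pr i = nat \<lfloor>m (4 * int i + 12)\<rfloor>" for i
  have prp: "\<forall>i. 1 \<le> i \<longrightarrow> i \<le> n \<longrightarrow> m (4 * int i + 12) = real (pr i) \<and> pr i < i \<and> arc (pr i) i \<and>
       V i = V (pr i) + cst (pr i) i"
  proof (intro allI impI)
    fix i assume i: "1 \<le> i" "i \<le> n"
    then obtain p where p: "m (4 * int i + 12) = real p" "p < i" "arc p i" "m (4 * int i + 13) = m (4 * int p + 13) + cst p i"
      using preds by blast
    then have "pr i = p" unfolding pr_def by simp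
    then show "m (4 * int i + 12) = real (pr i) \<and> pr i < i \<and> arc (pr i) i \<and> V i = V (pr i) + cst (pr i) i"
      using p unfolding V_def by simp
  qed
  have V0: "V 0 = 0" using p13 unfolding V_def by simp
  have opt: "min_split_path n Q q dd dO dB (rev (tr pr n)) \<and> path_cost dd dO dB (rev (tr pr n)) = V n"
    using opt_path[of V n pr Q q dd dO dB] V0 prp arcs unfolding V_def by blast
  define L where "L = length (tr pr n)"
  have L1: "L \<ge> 1" unfolding L_def by (subst tr.simps) auto
  define m1 where "m1 = m(5 := 1, 4 := m 0)"
  have F: "run prog (75, m) 2 (77, m1)" unfolding m1_def by (rule segF)
  have m1v: "m1 4 = real n" "m1 5 = real (1::nat)" using p0 unfolding m1_def by auto
  have rec1: "\<forall>i. 1 \<le> i \<longrightarrow> i \<le> n \<longrightarrow> m1 (4 * int i + 12) = real (pr i) \<and> pr i < i"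
    using prp unfolding m1_def by auto
  obtain m2 T1 where CL: "run prog (77, m1) T1 (87, m2)" "T1 \<le> 10 * n + 2"
    "m2 5 = real (1 + length (tr pr n) - 1)" "\<forall>a. a \<notin> {4,5,7,9} \<longrightarrow> m2 a = m1 a"
    using CL_loop[OF m1v rec1] by blast
  define m3 where "m3 = m2(4 := m2 0, 9 := 0, 6 := - m2 5)"
  have G: "run prog (87, m2) 3 (90, m3)" unfolding m3_def by (rule segG)
  have m3v: "m3 4 = real n" "m3 6 = real_of_int (- int L)" "- int L + int (length (tr pr n)) = 0"
    using CL(3,4) p0 L1 unfolding m3_def m1_def L_def by auto
  have rec3: "\<forall>i. 1 \<le> i \<longrightarrow> i \<le> n \<longrightarrow> m3 (4 * int i + 12) = real (pr i) \<and> pr i < i"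
    using rec1 CL(4) unfolding m3_def by auto
  obtain m4 T2 where WL: "run prog (90, m3) T2 (101, m4)" "T2 \<le> 11 * n + 3"
    "\<forall>k < length (tr pr n). m4 (- int L + int k) = real (tr pr n ! k)"
    "\<forall>a. a \<notin> {4,6,7,9} \<longrightarrow> (a < - int L \<or> 0 \<le> a) \<longrightarrow> m4 a = m3 a"
    using WL_loop[OF m3v rec3] by blast
  define m5 where "m5 = m4(2 := m4 8, 3 := m4 5)"
  have H: "run prog (101, m4) 2 (103, m5)" unfolding m5_def by (rule segH)
  have m48: "m4 8 = V n" using WL(4) CL(4) p8 unfolding m3_def m1_def V_def by auto
  have m45: "m4 5 = real L" using WL(4) CL(3) L1 unfolding m3_def L_def by auto
  have "output_ok n Q q dd dO dB m5"
    unfolding output_ok_def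
  proof (intro exI[of _ "rev (tr pr n)"] conjI allI impI)
    show "min_split_path n Q q dd dO dB (rev (tr pr n))" using opt by simp
    show "m5 2 = path_cost dd dO dB (rev (tr pr n))" using opt m48 unfolding m5_def by simp
    show "m5 3 = real (length (rev (tr pr n)))" using m45 unfolding m5_def L_def by simp
  next
    fix k assume k: "k < length (rev (tr pr n))"
    then have kL: "k < L" unfolding L_def by simp
    have "L - Suc k < length (tr pr n)" using kL unfolding L_def by simp
    then have "m4 (- int L + int (L - Suc k)) = real (tr pr n ! (L - Suc k))"
      using WL(3) by blast
    moreover have "- int L + int (L - Suc k) = - (int k + 1)" using kL by simp
    ultimately have a: "m4 (- (int k + 1)) = real (tr pr n ! (L - Suc k))" by metis
    have b: "m5 (- (int k + 1)) = m4 (- (int k + 1))" unfolding m5_def by simp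
    have c: "rev (tr pr n) ! k = tr pr n ! (L - Suc k)" using kL unfolding L_def by (simp add: rev_nth)
    show "m5 (- (int k + 1)) = real (rev (tr pr n) ! k)" using a b c by metis
  qed
  moreover have "run prog (75, m) (2 + T1 + 3 + T2 + 2) (103, m5)"
    using run_trans[OF run_trans[OF run_trans[OF run_trans[OF F CL(1)] G] WL(1)] H] .
  moreover have "2 + T1 + 3 + T2 + 2 \<le> 21 * n + 12" using CL(2) WL(2) by simp
  ultimately show ?thesis by blast
qed

lemma full: "\<exists>t m'. t \<le> 200 * n \<and> runs_in prog im t m' \<and> output_ok n Q q dd dO dB m'"
proof -
  have A: "run prog (0, im) 3 (3, im(11 := im 16, 5 := 1, 2 := 1))" by (rule segA)
  obtain m1 T1 where B: "run prog (3, im(11 := im 16, 5 := 1, 2 := 1)) T1 (75, m1)"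
    "T1 \<le> 80 * (n - 1) + 13 * (1 - 0) + 37" "Post m1"
    using main_loop[OF init_Inv] by blast
  obtain m2 T2 where C: "run prog (75, m1) T2 (103, m2)" "T2 \<le> 21 * n + 12" "output_ok n Q q dd dO dB m2"
    using out_phase[OF B(3)] by blast
  have "run prog (0, im) (3 + T1 + T2) (103, m2)" using run_trans[OF run_trans[OF A B(1)] C(1)] .
  moreover have "halted prog (103, m2)" by (simp add: halted_def)
  ultimately have "runs_in prog im (3 + T1 + T2) m2" by (rule runs_in_of_run)
  moreover have "3 + T1 + T2 \<le> 200 * n" using B(2) C(2) n1 by simp
  ultimately show ?thesis using C(3) by blast
qed

end

theorem mainTheorem2:
  shows "\<exists>(P :: instr list) (C :: nat). \<forall>(n :: nat) (Q :: real) q dd dO dB.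
     n \<ge> 1 \<longrightarrow> Q \<ge> 0 \<longrightarrow> (\<forall>i \<in> {1..n}. 0 \<le> q i \<and> q i \<le> Q) \<longrightarrow>
     (\<exists>t m'. t \<le> C * n \<and> runs_in P (init_mem n Q q dd dO dB) t m' \<and>
             output_ok n Q q dd dO dB m')"
proof (rule exI[of _ prog], rule exI[of _ 200], intro allI impI)
  fix n :: nat and Q :: real and q dd dO dB :: "nat \<Rightarrow> real"
  assume "n \<ge> 1" "Q \<ge> 0" "\<forall>i \<in> {1..n}. 0 \<le> q i \<and> q i \<le> Q"
  then interpret inst n Q q dd dO dB by unfold_locales auto
  show "\<exists>t m'. t \<le> 200 * n \<and> runs_in prog (init_mem n Q q dd dO dB) t m' \<and> output_ok n Q q dd dO dB m'"
    by (rule full)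
qed

end
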